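(* Let a countable group $G$ act continuously on a Polish space $X$ and let $E$ be an equivalence relation on $X$. If $E\subseteq E^X_G$ and $E$ is $G$-clopen, then $E$ is an $F_\sigma$ subset of $X\times X$ (in particular Borel). If $E$ is a clopen subset of $X\times X$, then $E$ is $G$-clopen.
   Context: $E^X_G$ is the orbit equivalence relation $x\mathrel{E^X_G}y\iff\exists g\in G\,(g\cdot x=y)$. A relation $R\subseteq X\times X$ is $G$-clopen if for every $g\in G$ the set $\{x\in X: (x,g\cdot x)\in R\}$ is clopen in $X$. *)

theory Defs
  imports "HOL-Analysis.Analysis"
begin

text \<open>A continuous action of a (countable, discrete) group 'g, written additively
  (group_add need not be commutative), on a topological space 'a.\<close>
definition continuous_action :: "('g::group_add \<Rightarrow> 'a::topological_space \<Rightarrow> 'a) \<Rightarrow> bool" where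
  "continuous_action act \<longleftrightarrow>
     (\<forall>x. act 0 x = x) \<and> (\<forall>g h x. act (g + h) x = act g (act h x)) \<and>
     (\<forall>g. continuous_on UNIV (act g))"

definition orbit_rel :: "('g \<Rightarrow> 'a \<Rightarrow> 'a) \<Rightarrow> ('a \<times> 'a) set" where
  "orbit_rel act = {(x, y). \<exists>g. act g x = y}"

definition G_clopen :: "('g \<Rightarrow> 'a::topological_space \<Rightarrow> 'a) \<Rightarrow> ('a \<times> 'a) set \<Rightarrow> bool" where
  "G_clopen act R \<longleftrightarrow> (\<forall>g. open {x. (x, act g x) \<in> R} \<and> closed {x. (x, act g x) \<in> R})"

end

theory Submission
  imports Defs
begin

theorem lemma3p4:
  fixes act :: "'g::{group_add, countable} \<Rightarrow> 'a::polish_space \<Rightarrow> 'a"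
    and E :: "('a \<times> 'a) set"
  assumes "continuous_action act"
    and "equiv UNIV E"
  shows "(E \<subseteq> orbit_rel act \<and> G_clopen act E \<longrightarrow> fsigma_in euclidean E \<and> E \<in> sets borel)
     \<and> (open E \<and> closed E \<longrightarrow> G_clopen act E)"
proof -
  have cont: "continuous_on UNIV (act g)" for g
    using assms(1) unfolding continuous_action_def by blast
  have cat: "continuous (at x) (act g)" for g x
    using cont[of g] by (simp add: continuous_on_eq_continuous_at)
  have cpair: "continuous (at x) (\<lambda>x. (x, act g x))" for g x
    using cat by (intro continuous_Pair continuous_ident) auto
  have vim: "{x. (x, act g x) \<in> S} = (\<lambda>x. (x, act g x)) -` S" for g S
    by auto
  have part2: "open E \<and> closed E \<longrightarrow> G_clopen act E"
    unfolding G_clopen_def vim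
    using continuous_open_vimage continuous_closed_vimage cpair by blast
  have part1: "E \<subseteq> orbit_rel act \<and> G_clopen act E \<longrightarrow> fsigma_in euclidean E \<and> E \<in> sets borel"
  proof
    assume h: "E \<subseteq> orbit_rel act \<and> G_clopen act E"
    define F where "F g = {p. fst p \<in> {x. (x, act g x) \<in> E} \<and> snd p = act g (fst p)}" for g
    have cl: "closed (F g)" for g
    proof -
      have c1: "closed {x. (x, act g x) \<in> E}" using h unfolding G_clopen_def by blast
      have "F g = ({x. (x, act g x) \<in> E} \<times> (UNIV::'a set)) \<inter> {p. snd p = act g (fst p)}"
        unfolding F_def by auto
      moreover have "closed ({x. (x, act g x) \<in> E} \<times> (UNIV::'a set))"
        using c1 by (intro closed_Times) auto
      moreover have "closed {p. snd p = act g (fst p)}"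
        apply (rule closed_Collect_eq)
         apply (intro continuous_intros)
        using cont by (intro continuous_on_compose2[OF cont[of g]] continuous_intros) auto
      ultimately show ?thesis by auto
    qed
    have EU: "E = \<Union> (range F)"
    proof
      show "E \<subseteq> \<Union> (range F)"
      proof
        fix p assume p: "p \<in> E"
        then obtain x y where xy: "p = (x, y)" by (cases p)
        with p h obtain g where "act g x = y" unfolding orbit_rel_def by blast
        then show "p \<in> \<Union> (range F)" using p xy unfolding F_def by auto
      qed
      show "\<Union> (range F) \<subseteq> E" unfolding F_def by auto
    qed
    have "fsigma_in euclidean E"
      unfolding EU
      by (rule fsigma_in_Union) (auto intro!: closed_imp_fsigma_in simp: cl)
    moreover have "E \<in> sets borel"
      unfolding EU using cl by (intro sets.countable_UN) (auto intro: borel_closed)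
    ultimately show "fsigma_in euclidean E \<and> E \<in> sets borel" by blast
  qed
  show ?thesis using part1 part2 by blast
qed

end
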